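(* Consider an ESP instance with integer weights and let $L^*$ be the minimum total latency of a feasible expanding search pattern. Fix $\varepsilon>0$, let $W=\sum_{v\in V}w_v$ and $\omega=\lceil \log W/\log(1+\varepsilon)\rceil$. For each $i\in\{0,\dots,\omega\}$ let $T_i$ be the tree obtained by applying a polynomial-time $5/2$-approximation algorithm for the quota version of the prize-collecting Steiner tree problem with quota $q_i=W-W(1+\varepsilon)^{-i}$, so that $T_i$ contains $r$, has total vertex weight at least $q_i$, and has length $\ell(T_i)=\sum_{e\in E(T_i)}\ell_e$ at most $5/2$ times the minimum length of such a tree; here $T_0=(\{r\},\emptyset)$. Let $H$ be the directed graph with vertex set $\{0,\dots,\omega\}$, arcs $(i,j)$ for all $i<j$, and arc costs $c_{i,j}=W(1+\varepsilon)^{-i}\ell(T_j)$. Then a shortest $(0,\omega)$-path in $H$ has cost at most $\frac52(1+\varepsilon)eL^*$.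
   Context: ESP: connected undirected graph $G=(V,E)$, root $r$, edge lengths $\ell_e\in\mathbb{Z}_{\ge0}$, vertex weights $w_v\in\mathbb{Z}_{\ge0}$, $V^*=\{v:w_v>0\}$. An expanding search pattern is a sequence $\sigma=(e_1,\dots,e_m)$ of edges with $r\in e_1$ such that $\{e_1,\dots,e_i\}$ is a tree for every $i$; it is feasible if it visits all of $V^*$. For $v\in V^*\setminus\{r\}$, $k_v=\min\{i:v\in e_i\}$, $k_r=0$, latency $L_v(\sigma)=\sum_{i\le k_v}\ell_{e_i}$, total latency $L(\sigma)=\sum_{v\in V^*}w_vL_v(\sigma)$. The cost of a path in $H$ is the sum of its arc costs. *)

theory Defs
  imports Complex_Main
begin

definition adj :: "'a set set \<Rightarrow> ('a \<times> 'a) set" where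
  "adj F = {(u, v). {u, v} \<in> F}"

definition graph :: "'a set \<Rightarrow> 'a set set \<Rightarrow> bool" where
  "graph V E \<longleftrightarrow> finite V \<and> (\<forall>e\<in>E. e \<subseteq> V \<and> card e = 2)"

definition connected_graph :: "'a set \<Rightarrow> 'a set set \<Rightarrow> bool" where
  "connected_graph V E \<longleftrightarrow> graph V E \<and> V \<noteq> {} \<and>
     (\<forall>u\<in>V. \<forall>v\<in>V. (u, v) \<in> (adj E)\<^sup>*)"

definition is_tree :: "'a set \<Rightarrow> 'a set set \<Rightarrow> bool" where
  "is_tree U F \<longleftrightarrow> connected_graph U F \<and> card F + 1 = card U"

definition expanding_pattern :: "'a set set \<Rightarrow> 'a \<Rightarrow> 'a set list \<Rightarrow> bool" where
  "expanding_pattern E r \<sigma> \<longleftrightarrow> set \<sigma> \<subseteq> E \<and> (\<sigma> \<noteq> [] \<longrightarrow> r \<in> hd \<sigma>) \<and>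
     (\<forall>i\<in>{1..length \<sigma>}. is_tree (\<Union> (set (take i \<sigma>))) (set (take i \<sigma>)))"

definition Vstar :: "'a set \<Rightarrow> ('a \<Rightarrow> nat) \<Rightarrow> 'a set" where
  "Vstar V w = {v \<in> V. w v > 0}"

definition feasible_pattern ::
  "'a set \<Rightarrow> 'a set set \<Rightarrow> 'a \<Rightarrow> ('a \<Rightarrow> nat) \<Rightarrow> 'a set list \<Rightarrow> bool" where
  "feasible_pattern V E r w \<sigma> \<longleftrightarrow> expanding_pattern E r \<sigma> \<and>
     Vstar V w \<subseteq> insert r (\<Union> (set \<sigma>))"

definition latency :: "('a set \<Rightarrow> nat) \<Rightarrow> 'a \<Rightarrow> 'a set list \<Rightarrow> 'a \<Rightarrow> nat" where
  "latency len r \<sigma> v = (if v = r then 0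
      else sum_list (map len (take (Suc (LEAST i. i < length \<sigma> \<and> v \<in> \<sigma> ! i)) \<sigma>)))"

definition total_latency ::
  "'a set \<Rightarrow> ('a set \<Rightarrow> nat) \<Rightarrow> ('a \<Rightarrow> nat) \<Rightarrow> 'a \<Rightarrow> 'a set list \<Rightarrow> nat" where
  "total_latency V len w r \<sigma> = (\<Sum>v\<in>Vstar V w. w v * latency len r \<sigma> v)"

definition ESP_opt ::
  "'a set \<Rightarrow> 'a set set \<Rightarrow> 'a \<Rightarrow> ('a set \<Rightarrow> nat) \<Rightarrow> ('a \<Rightarrow> nat) \<Rightarrow> nat" where
  "ESP_opt V E r len w = Inf {total_latency V len w r \<sigma> | \<sigma>. feasible_pattern V E r w \<sigma>}"

definition tree_length :: "('a set \<Rightarrow> nat) \<Rightarrow> 'a set \<times> 'a set set \<Rightarrow> nat" where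
  "tree_length len T = (\<Sum>e\<in>snd T. len e)"

definition tree_weight :: "('a \<Rightarrow> nat) \<Rightarrow> 'a set \<times> 'a set set \<Rightarrow> nat" where
  "tree_weight w T = (\<Sum>v\<in>fst T. w v)"

definition rooted_subtree :: "'a set \<Rightarrow> 'a set set \<Rightarrow> 'a \<Rightarrow> 'a set \<times> 'a set set \<Rightarrow> bool" where
  "rooted_subtree V E r T \<longleftrightarrow> fst T \<subseteq> V \<and> snd T \<subseteq> E \<and> r \<in> fst T \<and> is_tree (fst T) (snd T)"

definition quota_opt ::
  "'a set \<Rightarrow> 'a set set \<Rightarrow> 'a \<Rightarrow> ('a set \<Rightarrow> nat) \<Rightarrow> ('a \<Rightarrow> nat) \<Rightarrow> real \<Rightarrow> nat" where
  "quota_opt V E r len w q = Inf {tree_length len T | T. rooted_subtree V E r T \<and> real (tree_weight w T) \<ge> q}"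

definition H_path :: "nat \<Rightarrow> nat list \<Rightarrow> bool" where
  "H_path \<omega> p \<longleftrightarrow> p \<noteq> [] \<and> hd p = 0 \<and> last p = \<omega> \<and> set p \<subseteq> {0..\<omega>} \<and>
     (\<forall>k. Suc k < length p \<longrightarrow> p ! k < p ! Suc k)"

definition path_cost :: "(nat \<Rightarrow> nat \<Rightarrow> real) \<Rightarrow> nat list \<Rightarrow> real" where
  "path_cost c p = (\<Sum>k<length p - 1. c (p ! k) (p ! Suc k))"

definition shortest_path_cost :: "nat \<Rightarrow> (nat \<Rightarrow> nat \<Rightarrow> real) \<Rightarrow> real" where
  "shortest_path_cost \<omega> c = Min {path_cost c p | p. H_path \<omega> p}"

end

theory Submission
  imports Defs
begin

lemma ln_cubic: assumes "(0::real) \<le> x" shows "ln (1 + x) \<le> x - x^2/2 + x^3/3"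
proof -
  let ?g = "\<lambda>x::real. x - x^2/2 + x^3/3 - ln (1 + x)"
  have "?g 0 \<le> ?g x"
  proof (rule DERIV_nonneg_imp_nondecreasing[OF assms])
    fix y :: real assume y: "0 \<le> y" "y \<le> x"
    have "DERIV ?g y :> 1 - y + y^2 - 1/(1+y)"
      using y by (auto intro!: derivative_eq_intros simp: field_simps power2_eq_square)
    moreover have "1 - y + y^2 - 1/(1+y) \<ge> 0"
    proof -
      have "1 - y + y^2 - 1/(1+y) = y^3/(1+y)" using y by (simp add: field_simps power3_eq_cube power2_eq_square) 
      thus ?thesis using y by simp
    qed
    ultimately show "\<exists>d. DERIV ?g y :> d \<and> d \<ge> 0" by blast
  qed
  thus ?thesis by simp
qed

lemma e_lower: "exp 1 > (256/100::real)"
proof -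
  have "exp 1 > (1 + 1/(8::real)) powr (8::real)" using exp_1_gt_powr[of "8::real"] by linarith
  moreover have "(1 + 1/8::real) powr (real 8) = (1 + 1/8::real)^8"
    by (rule powr_realpow) simp
  moreover have "(1 + 1/8::real)^8 > 256/100" by (simp add: power_numeral_reduce)
  ultimately show ?thesis by simp
qed

lemma choose_k: assumes eps: "(\<epsilon>::real) > 0" shows "\<exists>k::nat. k \<ge> 1 \<and> (1+\<epsilon>)^k \<le> exp 1 * \<epsilon> * k"
proof (cases "\<epsilon> \<ge> 65/100")
  case True
  have "exp 1 * \<epsilon> \<ge> 256/100 * \<epsilon>" using e_lower eps by (intro mult_right_mono) auto
  hence "1+\<epsilon> \<le> exp 1 * \<epsilon>" using True by linarith
  hence "(1+\<epsilon>)^1 \<le> exp 1 * \<epsilon> * 1" by simp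
  thus ?thesis by (intro exI[of _ 1]) simp
next
  case False
  define L where "L = ln (1+\<epsilon>)"
  have L0: "L > 0" using eps by (simp add: L_def)
  have Le: "L \<le> \<epsilon>" using eps by (simp add: L_def ln_add_one_self_le_self)
  have Lc: "L \<le> \<epsilon> - \<epsilon>^2/2 + \<epsilon>^3/3" using eps by (simp add: L_def ln_cubic)
  define k where "k = nat \<lfloor>1/L + 1/2\<rfloor>"
  have "1/L \<ge> 1/\<epsilon>" using L0 Le by (simp add: frac_le)
  moreover have "1/\<epsilon> > 1" using False eps by simp
  ultimately have k1: "real k > 1/L - 1/2" "real k \<le> 1/L + 1/2" "k \<ge> 1"
    unfolding k_def by linarith+
  define x where "x = real k * L"
  have x1: "x > 1 - L/2" "x \<le> 1 + L/2" using k1 L0 unfolding x_def by (simp_all add: field_simps)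
  have x0: "x > 0" using x1 Le False by simp
  have A: "ln (\<epsilon>/L) \<ge> 1 - L/\<epsilon>"
  proof -
    have "ln (L/\<epsilon>) \<le> L/\<epsilon> - 1" using L0 eps by (intro ln_le_minus_one) simp
    moreover have "ln (\<epsilon>/L) = - ln (L/\<epsilon>)" using L0 eps by (simp add: ln_div)
    ultimately show ?thesis by simp
  qed
  have B: "ln x \<ge> 1 - 1/x"
  proof -
    have "ln (1/x) \<le> 1/x - 1" using x0 by (intro ln_le_minus_one) simp
    moreover have "ln (1/x) = - ln x" using x0 by (simp add: ln_div)
    ultimately show ?thesis by simp
  qed
  have C: "L/\<epsilon> \<le> 1 - \<epsilon>/2 + \<epsilon>^2/3" using Lc eps by (simp add: field_simps power2_eq_square power3_eq_cube)
  have D: "x + 1/x - 2 = (x-1)^2/x" using x0 by (simp add: field_simps power2_eq_square)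
  have "\<bar>x-1\<bar> \<le> \<epsilon>/2" using x1 L0 Le by linarith
  hence "\<bar>x-1\<bar>^2 \<le> (\<epsilon>/2)^2" by (intro power_mono) auto
  hence sq: "(x-1)^2 \<le> \<epsilon>^2/4" by (simp add: power_divide)
  have "(x-1)^2/x \<le> (\<epsilon>^2/4)/(1 - \<epsilon>/2)"
  proof (rule frac_le[OF _ sq])
    show "1 - \<epsilon>/2 \<le> x" using x1 Le by linarith
    show "0 < 1 - \<epsilon>/2" using False by linarith
  qed simp_all
  also have "\<dots> \<le> \<epsilon>/2 - \<epsilon>^2/3"
  proof -
    have "\<epsilon>^2/4 \<le> (\<epsilon>/2 - \<epsilon>^2/3) * (1 - \<epsilon>/2)"
    proof -
      have eq1: "(\<epsilon>/2 - \<epsilon>^2/3) * (1 - \<epsilon>/2) - \<epsilon>^2/4 = \<epsilon> * ((1/2 - \<epsilon>/3)*(1-\<epsilon>/2) - \<epsilon>/4)"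
        by (simp add: field_simps power2_eq_square)
      have nn: "(1/2 - \<epsilon>/3)*(1-\<epsilon>/2) - \<epsilon>/4 \<ge> 0"
      proof -
        have "(1/2 - \<epsilon>/3)*(1-\<epsilon>/2) - \<epsilon>/4 = 1/2 - 5*\<epsilon>/6 + \<epsilon>*\<epsilon>/6" by (simp add: algebra_simps)
        moreover have "1/2 - 5*\<epsilon>/6 + \<epsilon>*\<epsilon>/6 = ((65/100-\<epsilon>)*(4-\<epsilon>))/6 + (1/15 - 7*\<epsilon>/120)" by (simp add: field_simps)
        moreover have "(65/100 - \<epsilon>)*(4 - \<epsilon>) \<ge> 0" using False by (intro mult_nonneg_nonneg) auto
        moreover have "1/15 - 7*\<epsilon>/120 \<ge> 0" using False by simp
        ultimately show ?thesis by (simp only:)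
      qed
      have "\<epsilon> * ((1/2 - \<epsilon>/3)*(1-\<epsilon>/2) - \<epsilon>/4) \<ge> 0" using eps nn by simp
      thus ?thesis using eq1 by linarith
    qed
    hence "(\<epsilon>^2/4)/(1 - \<epsilon>/2) \<le> ((\<epsilon>/2 - \<epsilon>^2/3) * (1 - \<epsilon>/2))/(1 - \<epsilon>/2)"
      using False by (intro divide_right_mono) auto
    moreover have "1 - \<epsilon>/2 \<noteq> 0" using False by simp
    ultimately show ?thesis by simp
  qed
  finally have E: "x + 1/x - 2 \<le> \<epsilon>/2 - \<epsilon>^2/3" using D by simp
  have F: "x \<le> 1 + ln (\<epsilon>/L) + ln x" using A B C E by linarith
  have "ln (\<epsilon>/L) + ln x = ln (\<epsilon>/L * x)"
    using L0 eps x0 by (subst ln_mult) auto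
  also have "\<epsilon>/L * x = \<epsilon> * k" using L0 by (simp add: x_def field_simps)
  finally have "ln (\<epsilon>/L) + ln x = ln (\<epsilon> * k)" .
  hence G: "x \<le> 1 + ln (\<epsilon> * k)" using F by simp
  have "(1+\<epsilon>)^k = exp x" using eps by (simp add: x_def L_def exp_of_nat_mult)
  also have "\<dots> \<le> exp (1 + ln (\<epsilon> * k))" using G by simp
  also have "\<dots> = exp 1 * \<epsilon> * k" using eps k1 by (simp add: exp_add)
  finally show ?thesis using k1 by blast
qed

lemma geom_sum_le:
  fixes a :: real assumes a: "a > 1"
  shows "(\<Sum>x\<in>{m..<n}. 1 / a^x) \<le> a / ((a-1) * a^m)"
proof -
  have eq: "(\<Sum>x\<in>{m..<m+n}. 1 / a^x) = a/(a-1) * (1/a^m - 1/a^(m+n))" for n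
  proof (induction n)
    case 0 then show ?case by simp
  next
    case (Suc n)
    have "(\<Sum>x\<in>{m..<m+Suc n}. 1 / a^x) = (\<Sum>x\<in>{m..<m+n}. 1 / a^x) + 1/a^(m+n)"
      by simp
    also have "\<dots> = a/(a-1) * (1/a^m - 1/a^(m+n)) + 1/a^(m+n)" using Suc by simp
    also have "\<dots> = a/(a-1) * (1/a^m - 1/a^(m+Suc n))"
      using a by (simp add: field_simps)
    finally show ?case .
  qed
  show ?thesis
  proof (cases "m \<le> n")
    case True
    then obtain d where "n = m + d" by (metis le_add_diff_inverse)
    hence "(\<Sum>x\<in>{m..<n}. 1 / a^x) = a/(a-1) * (1/a^m - 1/a^n)" using eq by simp
    also have "\<dots> \<le> a/(a-1) * (1/a^m)"
      using a by (intro mult_left_mono) auto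
    also have "\<dots> = a / ((a-1) * a^m)" by simp
    finally show ?thesis .
  next
    case False
    thus ?thesis using a by simp
  qed
qed

lemma pointwise:
  fixes W a R :: real and k \<omega> :: nat
  assumes W: "W > 0" and a: "a > 1" and k: "k \<ge> 1" and R0: "0 \<le> R" and RW: "R \<le> W"
  shows "(\<Sum>s<k. (if W / a^(min \<omega> (Suc s)) < R then W else 0))
       + (\<Sum>x\<in>{1..<\<omega>}. (if W / a^(min \<omega> (x+k)) < R then W / a^x else 0))
       \<le> R * a^(k+1) / (a-1)"
proof (cases "\<exists>j\<le>\<omega>. W / a^j < R")
  case False
  hence "\<forall>y. \<not> (W / a^(min \<omega> y) < R)" by auto
  hence "(\<Sum>s<k. (if W / a^(min \<omega> (Suc s)) < R then W else 0))
       + (\<Sum>x\<in>{1..<\<omega>}. (if W / a^(min \<omega> (x+k)) < R then W / a^x else 0)) = 0" by simp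
  moreover have "R * a^(k+1) / (a-1) \<ge> 0" using R0 a by simp
  ultimately show ?thesis by simp
next
  case True
  define j0 where "j0 = (LEAST j. j \<le> \<omega> \<and> W / a^j < R)"
  have j0: "j0 \<le> \<omega>" "W / a^j0 < R" using LeastI_ex[OF True[simplified Bex_def[symmetric]]] 
    unfolding j0_def by auto
  have mono: "W / a^j \<le> W / a^i" if "i \<le> j" for i j
    using that a W by (intro divide_left_mono power_increasing) auto
  have cond: "(W / a^(min \<omega> y) < R) \<longleftrightarrow> j0 \<le> y" for y
  proof
    assume h: "W / a^(min \<omega> y) < R"
    have "j0 \<le> min \<omega> y" unfolding j0_def by (rule Least_le) (use h in simp)
    thus "j0 \<le> y" by simp
  next
    assume "j0 \<le> y"
    hence "j0 \<le> min \<omega> y" using j0 by simp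
    thus "W / a^(min \<omega> y) < R" using mono[of j0 "min \<omega> y"] j0 by linarith
  qed
  have j01: "j0 \<ge> 1"
  proof (rule ccontr)
    assume "\<not> j0 \<ge> 1" hence "j0 = 0" by simp
    thus False using j0 RW by simp
  qed
  have S1: "(\<Sum>s<k. (if W / a^(min \<omega> (Suc s)) < R then W else 0)) = W * card {s. s<k \<and> j0 \<le> Suc s}"
    by (simp add: cond sum.If_cases[of "{..<k}"] Int_def)
  define m where "m = max 1 (j0 - k)"
  have S2: "(\<Sum>x\<in>{1..<\<omega>}. (if W / a^(min \<omega> (x+k)) < R then W / a^x else 0))
      \<le> W * (a / ((a-1) * a^m))"
  proof -
    have "(\<Sum>x\<in>{1..<\<omega>}. (if W / a^(min \<omega> (x+k)) < R then W / a^x else 0))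
        \<le> (\<Sum>x\<in>{m..<\<omega>}. W / a^x)"
    proof -
      have "(\<Sum>x\<in>{1..<\<omega>}. (if W / a^(min \<omega> (x+k)) < R then W / a^x else 0))
          = (\<Sum>x\<in>{1..<\<omega>}. (if x \<in> {m..<\<omega>} then W / a^x else 0))"
        by (rule sum.cong) (auto simp: cond m_def)
      also have "\<dots> = (\<Sum>x\<in>{1..<\<omega>} \<inter> {m..<\<omega>}. W / a^x)"
        by (rule sum.inter_restrict[symmetric]) simp
      also have "{1..<\<omega>} \<inter> {m..<\<omega>} = {m..<\<omega>}" by (auto simp: m_def)
      finally show ?thesis by simp
    qed
    also have "\<dots> = W * (\<Sum>x\<in>{m..<\<omega>}. 1 / a^x)" by (simp add: sum_distrib_left)
    also have "\<dots> \<le> W * (a / ((a-1) * a^m))"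
      using geom_sum_le[OF a] W by (intro mult_left_mono) auto
    finally show ?thesis .
  qed
  have apos: "a > 0" using a by simp
  show ?thesis
  proof (cases "j0 \<le> k")
    case False
    hence "{s. s<k \<and> j0 \<le> Suc s} = {}" by auto
    hence S1': "(\<Sum>s<k. (if W / a^(min \<omega> (Suc s)) < R then W else 0)) = 0" using S1 by simp
    have m: "m = j0 - k" using False by (simp add: m_def)
    have "a^j0 = a^m * a^k" using False by (simp add: m power_add[symmetric])
    hence "W * (a / ((a-1) * a^m)) = (W / a^j0) * a^(k+1) / (a-1)"
      using a by (simp add: field_simps)
    also have "\<dots> \<le> R * a^(k+1) / (a-1)"
      using j0 a by (intro divide_right_mono mult_right_mono) auto
    finally show ?thesis using S1' S2 by simp
  next
    case True
    have "{s. s<k \<and> j0 \<le> Suc s} = {j0 - 1..<k}" using j01 by auto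
    hence S1': "(\<Sum>s<k. (if W / a^(min \<omega> (Suc s)) < R then W else 0)) = W * (k + 1 - j0)"
      using S1 True j01 by simp
    have m: "m = 1" using True by (simp add: m_def)
    define u where "u = k + 1 - j0"
    have u: "k + 1 = u + j0" using True unfolding u_def by simp
    have bern: "1 + real u * (a - 1) \<le> a^u"
      using Bernoulli_inequality[of "a-1" u] a by simp
    have "W * (k + 1 - j0) + W * (a / ((a-1) * a^m)) = W * (1 + real u * (a-1)) / (a-1)"
      using a True by (simp add: m u_def field_simps of_nat_diff)
    also have "\<dots> \<le> W * a^u / (a-1)"
      using bern W a by (intro divide_right_mono mult_left_mono) auto
    also have "\<dots> = (W / a^j0) * a^(k+1) / (a-1)"
    proof -
      have "a^(k+1) = a^u * a^j0" unfolding u by (rule power_add)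
      thus ?thesis using a by (simp add: field_simps)
    qed
    also have "\<dots> \<le> R * a^(k+1) / (a-1)"
      using j0 a by (intro divide_right_mono mult_right_mono) auto
    finally show ?thesis using S1' S2 by simp
  qed
qed

function chn :: "nat \<Rightarrow> nat \<Rightarrow> nat \<Rightarrow> nat list" where
  "chn w d i = (if w \<le> i then [w] else i # chn w d (i + Suc d))"
  by pat_completeness auto
termination by (relation "measure (\<lambda>(w, d, i). w - i)") auto

declare chn.simps[simp del]

lemma chn_ne: "chn w d i \<noteq> []"
  by (subst chn.simps) simp

lemma hd_chn: "hd (chn w d i) = min w i"
  by (subst chn.simps) simp

lemma last_chn: "last (chn w d i) = w"
  by (induction w d i rule: chn.induct) (subst chn.simps, simp add: chn_ne)

lemma set_chn: "x \<in> set (chn w d i) \<Longrightarrow> min w i \<le> x \<and> x \<le> w"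
proof (induction w d i rule: chn.induct)
  case (1 w d i)
  show ?case
  proof (cases "w \<le> i")
    case True thus ?thesis using "1.prems" by (subst (asm) chn.simps) simp
  next
    case False
    hence "x = i \<or> x \<in> set (chn w d (i + Suc d))" using "1.prems" by (subst (asm) chn.simps) simp
    thus ?thesis using "1.IH"[OF False] False by auto
  qed
qed

lemma sorted_chn: "sorted_wrt (<) (chn w d i)"
proof (induction w d i rule: chn.induct)
  case (1 w d i)
  show ?case
  proof (cases "w \<le> i")
    case True thus ?thesis by (subst chn.simps) simp
  next
    case False
    have "\<forall>x\<in>set (chn w d (i + Suc d)). i < x" using set_chn[of _ w d "i + Suc d"] False by fastforce
    thus ?thesis using "1.IH"[OF False] False by (subst chn.simps) simp
  qed
qed

lemma pc_cons2: "path_cost c (x # y # zs) = c x y + path_cost c (y # zs)"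
  unfolding path_cost_def length_Cons diff_Suc_1 sum.lessThan_Suc_shift by simp

lemma pc_single: "path_cost c [x] = 0"
  unfolding path_cost_def by simp

lemma pc_cons: "ys \<noteq> [] \<Longrightarrow> path_cost c (x # ys) = c x (hd ys) + path_cost c ys"
  by (cases ys) (simp_all add: pc_cons2)

lemma dvd_step: 
  assumes "i < w"
  shows "{x. i \<le> x \<and> x < w \<and> Suc d dvd (x - i)} = insert i {x. i + Suc d \<le> x \<and> x < w \<and> Suc d dvd (x - (i + Suc d))}"
proof (intro set_eqI iffI)
  fix x assume x: "x \<in> {x. i \<le> x \<and> x < w \<and> Suc d dvd (x - i)}"
  show "x \<in> insert i {x. i + Suc d \<le> x \<and> x < w \<and> Suc d dvd (x - (i + Suc d))}"
  proof (cases "x = i")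
    case False
    hence "x - i > 0" using x by auto
    hence "Suc d \<le> x - i" using x by (auto intro: dvd_imp_le)
    moreover have "x - (i + Suc d) = (x - i) - Suc d" by simp
    moreover have "Suc d dvd (x - i)" using x by simp
    hence "Suc d dvd (x - i) - Suc d" using dvd_diff_nat[OF _ dvd_refl] by blast
    ultimately have "Suc d dvd x - (i + Suc d)" by metis
    thus ?thesis using x \<open>Suc d \<le> x - i\<close> by auto
  qed simp
next
  fix x assume x: "x \<in> insert i {x. i + Suc d \<le> x \<and> x < w \<and> Suc d dvd (x - (i + Suc d))}"
  show "x \<in> {x. i \<le> x \<and> x < w \<and> Suc d dvd (x - i)}"
  proof (cases "x = i")
    case False
    hence h: "i + Suc d \<le> x" "x < w" "Suc d dvd (x - (i + Suc d))" using x by auto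
    have e: "x - i = (x - (i + Suc d)) + Suc d" using h by simp
    have "Suc d dvd (x - (i + Suc d)) + Suc d" using h(3) by (rule dvd_add) simp
    hence "Suc d dvd (x - i)" by (subst e)
    thus ?thesis using h by simp
  qed (use assms in simp)
qed

lemma cost_chn:
  "path_cost c (chn w d i) = (\<Sum>x\<in>{x. i \<le> x \<and> x < w \<and> Suc d dvd (x - i)}. c x (min w (x + Suc d)))"
proof (induction w d i rule: chn.induct)
  case (1 w d i)
  show ?case
  proof (cases "w \<le> i")
    case True
    hence emp: "{x. i \<le> x \<and> x < w \<and> Suc d dvd (x - i)} = {}" by auto
    have pc0: "path_cost c (chn w d i) = 0" using True by (subst chn.simps) (simp add: pc_single)
    show ?thesis using pc0 unfolding emp by simp
  next
    case False
    have fin: "finite {x. i + Suc d \<le> x \<and> x < w \<and> Suc d dvd (x - (i + Suc d))}" by simp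
    have "path_cost c (chn w d i) = c i (min w (i + Suc d)) + path_cost c (chn w d (i + Suc d))"
      using False by (subst chn.simps) (simp add: pc_cons chn_ne hd_chn)
    also have "\<dots> = (\<Sum>x\<in>{x. i \<le> x \<and> x < w \<and> Suc d dvd (x - i)}. c x (min w (x + Suc d)))"
      using "1.IH"[OF False] False fin by (simp add: dvd_step)
    finally show ?thesis .
  qed
qed

lemma H_path_chn:
  assumes "\<omega> \<ge> 1"
  shows "H_path \<omega> (0 # chn \<omega> d (Suc s))"
proof -
  have pos: "\<forall>x\<in>set (chn \<omega> d (Suc s)). 0 < x" using set_chn[of _ \<omega> d "Suc s"] assms by fastforce
  have sw: "sorted_wrt (<) (0 # chn \<omega> d (Suc s))" using pos sorted_chn by simp
  show ?thesis unfolding H_path_def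
  proof (intro conjI allI impI)
    show "last (0 # chn \<omega> d (Suc s)) = \<omega>" by (simp add: chn_ne last_chn)
    show "set (0 # chn \<omega> d (Suc s)) \<subseteq> {0..\<omega>}" using set_chn[of _ \<omega> d "Suc s"] by auto
    fix k assume "Suc k < length (0 # chn \<omega> d (Suc s))"
    thus "(0 # chn \<omega> d (Suc s)) ! k < (0 # chn \<omega> d (Suc s)) ! Suc k"
      using sw unfolding sorted_wrt_iff_nth_less by blast
  qed simp_all
qed

lemma finite_H_paths: "finite {p. H_path \<omega> p}"
proof (rule finite_subset)
  show "{p. H_path \<omega> p} \<subseteq> {p. set p \<subseteq> {0..\<omega>} \<and> length p \<le> Suc \<omega>}"
  proof (intro subsetI)
    fix p assume "p \<in> {p. H_path \<omega> p}"
    hence h: "H_path \<omega> p" by simp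
    have s1: "set p \<subseteq> {0..\<omega>}" using h by (simp add: H_path_def)
    have "sorted_wrt (<) p"
      using h unfolding H_path_def by (simp add: sorted_wrt_iff_nth_Suc_transp)
    hence "distinct p" by (simp add: strict_sorted_iff)
    hence "length p = card (set p)" by (simp add: distinct_card)
    also have "\<dots> \<le> card {0..\<omega>}" using h by (intro card_mono) (auto simp: H_path_def)
    finally show "p \<in> {p. set p \<subseteq> {0..\<omega>} \<and> length p \<le> Suc \<omega>}" using s1 by simp
  qed
  show "finite {p. set p \<subseteq> {0..\<omega>} \<and> length p \<le> Suc \<omega>}"
    by (rule finite_lists_length_le) simp
qed

lemma exists_avg:
  fixes f :: "nat \<Rightarrow> real"
  assumes "k \<ge> 1" "(\<Sum>s<k. f s) \<le> real k * B"
  shows "\<exists>s<k. f s \<le> B"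
proof (rule ccontr)
  assume "\<not> ?thesis"
  hence "\<forall>s\<in>{..<k}. B < f s" by auto
  hence "(\<Sum>s<k. B) < (\<Sum>s<k. f s)" using assms(1) by (intro sum_strict_mono) (auto simp: lessThan_empty_iff)
  thus False using assms(2) by simp
qed

lemma mod_iff:
  fixes k y x :: nat
  assumes "y < k"
  shows "(1 \<le> x \<and> (x - 1) mod k = y) \<longleftrightarrow> (Suc y \<le> x \<and> k dvd (x - Suc y))"
proof
  assume h: "1 \<le> x \<and> (x - 1) mod k = y"
  have "y \<le> x - 1" using h by (metis mod_less_eq_dividend)
  moreover have "(x - 1) mod k = y mod k" using h assms by simp
  ultimately have "k dvd (x - 1) - y" using mod_eq_dvd_iff_nat by blast
  moreover have "Suc y \<le> x" using h \<open>y \<le> x - 1\<close> by linarith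
  ultimately show "Suc y \<le> x \<and> k dvd (x - Suc y)" by (simp add: diff_diff_add)
next
  assume h: "Suc y \<le> x \<and> k dvd (x - Suc y)"
  have "k dvd (x - 1) - y" using h by (simp add: diff_diff_add)
  moreover have "y \<le> x - 1" using h by arith
  ultimately have "(x - 1) mod k = y mod k" using mod_eq_dvd_iff_nat by blast
  thus "1 \<le> x \<and> (x - 1) mod k = y" using h assms by simp
qed

lemma comb:
  fixes W a C :: real and \<omega> N k :: nat and ell R :: "nat \<Rightarrow> real" and \<tau> :: "nat \<Rightarrow> nat"
  assumes W: "W > 0" and a: "a > 1" and k: "k \<ge> 1" and om: "\<omega> \<ge> 1" and C: "C \<ge> 0"
    and R: "\<And>t. 0 \<le> R t \<and> R t \<le> W"
    and tau: "\<And>j. j \<le> \<omega> \<Longrightarrow> real (\<tau> j) = (\<Sum>t<N. if W / a^j < R t then 1 else 0)"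
    and hell: "\<And>j. 1 \<le> j \<Longrightarrow> j \<le> \<omega> \<Longrightarrow> ell j \<le> C * real (\<tau> j)"
    and kc: "a^k \<le> exp 1 * (a-1) * k"
  shows "\<exists>p. H_path \<omega> p \<and> path_cost (\<lambda>i j. W / a^i * ell j) p \<le> C * a * exp 1 * (\<Sum>t<N. R t)"
proof -
  define c where "c = (\<lambda>i j. W / a^i * ell j)"
  define d where "d = k - 1"
  have kd: "Suc d = k" using k by (simp add: d_def)
  define S where "S = (\<lambda>s. {x. Suc s \<le> x \<and> x < \<omega> \<and> k dvd (x - Suc s)})"
  define P where "P = (\<lambda>s. 0 # chn \<omega> d (Suc s))"
  have cost: "path_cost c (P s) = c 0 (min \<omega> (Suc s)) + (\<Sum>x\<in>S s. c x (min \<omega> (x + k)))" for s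
    unfolding P_def using kd by (simp add: pc_cons chn_ne hd_chn cost_chn S_def)
  have grp: "(\<Sum>s<k. \<Sum>x\<in>S s. h x) = (\<Sum>x\<in>{1..<\<omega>}. h x)" for h :: "nat \<Rightarrow> real"
  proof -
    have "(\<Sum>s<k. \<Sum>x\<in>{x. x \<in> {1..<\<omega>} \<and> (x - 1) mod k = s}. h x) = (\<Sum>x\<in>{1..<\<omega>}. h x)"
      using k by (intro sum.group) auto
    moreover have "{x. x \<in> {1..<\<omega>} \<and> (x - 1) mod k = s} = S s" if "s < k" for s
      using mod_iff[OF that] unfolding S_def by auto
    ultimately show ?thesis by simp
  qed
  have cb: "c i j \<le> C * (\<Sum>t<N. if W / a^j < R t then W / a^i else 0)" if "1 \<le> j" "j \<le> \<omega>" for i j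
  proof -
    have "c i j \<le> W / a^i * (C * real (\<tau> j))"
      unfolding c_def using hell[OF that] W a by (intro mult_left_mono) auto
    also have "\<dots> = C * (\<Sum>t<N. W / a^i * (if W / a^j < R t then 1 else 0))"
      using tau[OF that(2)] by (simp add: sum_distrib_left mult_ac)
    also have "\<dots> = C * (\<Sum>t<N. if W / a^j < R t then W / a^i else 0)"
      by (intro arg_cong[where f="\<lambda>x. C * x"] sum.cong) auto
    finally show ?thesis .
  qed
  define Phi where "Phi = (\<lambda>t. (\<Sum>s<k. (if W / a^(min \<omega> (Suc s)) < R t then W else 0))
       + (\<Sum>x\<in>{1..<\<omega>}. (if W / a^(min \<omega> (x+k)) < R t then W / a^x else 0)))"
  have "(\<Sum>s<k. path_cost c (P s)) = (\<Sum>s<k. c 0 (min \<omega> (Suc s))) + (\<Sum>x\<in>{1..<\<omega>}. c x (min \<omega> (x + k)))"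
    by (simp add: cost sum.distrib grp)
  also have "\<dots> \<le> (\<Sum>s<k. C * (\<Sum>t<N. if W / a^(min \<omega> (Suc s)) < R t then W / a^0 else 0)) +
       (\<Sum>x\<in>{1..<\<omega>}. C * (\<Sum>t<N. if W / a^(min \<omega> (x+k)) < R t then W / a^x else 0))"
    using om by (intro add_mono sum_mono cb) auto
  also have "\<dots> = C * (\<Sum>s<k. \<Sum>t<N. if W / a^(min \<omega> (Suc s)) < R t then W / a^0 else 0) +
       C * (\<Sum>x\<in>{1..<\<omega>}. \<Sum>t<N. if W / a^(min \<omega> (x+k)) < R t then W / a^x else 0)"
    by (simp only: sum_distrib_left)
  also have "\<dots> = C * (\<Sum>t<N. \<Sum>s<k. if W / a^(min \<omega> (Suc s)) < R t then W / a^0 else 0) +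
       C * (\<Sum>t<N. \<Sum>x\<in>{1..<\<omega>}. if W / a^(min \<omega> (x+k)) < R t then W / a^x else 0)"
    by (simp only: sum.swap[of _ "{..<k}"] sum.swap[of _ "{1..<\<omega>}"])
  also have "\<dots> = C * (\<Sum>t<N. Phi t)"
    unfolding Phi_def by (simp add: sum.distrib distrib_left cong: if_cong)
  also have "\<dots> \<le> C * (\<Sum>t<N. R t * (a * exp 1 * k))"
  proof (intro mult_left_mono sum_mono C)
    fix t
    have "Phi t \<le> R t * a^(k+1) / (a-1)" unfolding Phi_def using pointwise[OF W a k] R by blast
    also have "\<dots> = R t * (a * (a^k / (a-1)))" by simp
    also have "\<dots> \<le> R t * (a * (exp 1 * k))"
    proof -
      have "a^k / (a-1) \<le> exp 1 * k" using kc a by (simp add: divide_le_eq mult.commute mult.left_commute)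
      thus ?thesis using R[of t] a by (intro mult_left_mono) auto
    qed
    finally show "Phi t \<le> R t * (a * exp 1 * k)" by (simp add: mult.assoc)
  qed
  also have "\<dots> = real k * (C * a * exp 1 * (\<Sum>t<N. R t))"
  proof -
    have "(\<Sum>t<N. R t * (a * exp 1 * k)) = (\<Sum>t<N. R t) * (a * exp 1 * k)"
      by (rule sum_distrib_right[symmetric])
    thus ?thesis by (simp add: mult_ac)
  qed
  finally obtain s where "s < k" "path_cost c (P s) \<le> C * a * exp 1 * (\<Sum>t<N. R t)"
    using exists_avg[OF k] by blast
  moreover have "H_path \<omega> (P s)" unfolding P_def by (rule H_path_chn[OF om])
  ultimately show ?thesis unfolding c_def by blast
qed

lemma tree_single: "is_tree {r} {}"
  unfolding is_tree_def connected_graph_def graph_def by simp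

lemma tree_extend:
  assumes T: "is_tree U F" and u: "u \<in> U" and v: "v \<notin> U"
  shows "is_tree (insert v U) (insert {u, v} F)"
proof -
  have cg: "connected_graph U F" and cardF: "card F + 1 = card U" using T by (auto simp: is_tree_def)
  have finU: "finite U" and edges: "\<forall>e\<in>F. e \<subseteq> U \<and> card e = 2"
    using cg by (auto simp: connected_graph_def graph_def)
  have conn: "\<forall>x\<in>U. \<forall>y\<in>U. (x, y) \<in> (adj F)\<^sup>*" using cg by (simp add: connected_graph_def)
  have uv: "u \<noteq> v" using u v by auto
  have finF: "finite F"
  proof (rule finite_subset)
    show "F \<subseteq> Pow U" using edges by auto
  qed (use finU in simp)
  have nF: "{u, v} \<notin> F" using edges v by auto
  define F' where "F' = insert {u, v} F"
  have sub: "(adj F)\<^sup>* \<subseteq> (adj F')\<^sup>*" by (rule rtrancl_mono) (auto simp: adj_def F'_def)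
  have e1: "(u, v) \<in> (adj F')\<^sup>*" by (auto simp: adj_def F'_def)
  have e2: "(v, u) \<in> (adj F')\<^sup>*"
  proof -
    have "(v, u) \<in> adj F'" by (auto simp: adj_def F'_def insert_commute)
    thus ?thesis by blast
  qed
  have conn': "\<forall>x\<in>insert v U. \<forall>y\<in>insert v U. (x, y) \<in> (adj F')\<^sup>*"
  proof (intro ballI)
    fix x y assume x: "x \<in> insert v U" and y: "y \<in> insert v U"
    have c: "(x', y') \<in> (adj F')\<^sup>*" if "x' \<in> U" "y' \<in> U" for x' y'
      using conn that sub by blast
    show "(x, y) \<in> (adj F')\<^sup>*"
    proof (cases "x = v")
      case True
      show ?thesis
      proof (cases "y = v")
        case False
        hence "y \<in> U" using y by simp
        thus ?thesis using True e2 c[OF u] by (meson rtrancl_trans)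
      qed (use True in simp)
    next
      case False
      hence xU: "x \<in> U" using x by simp
      show ?thesis
      proof (cases "y = v")
        case True
        thus ?thesis using e1 c[OF xU u] by (meson rtrancl_trans)
      next
        case False
        thus ?thesis using y c[OF xU] by simp
      qed
    qed
  qed
  have "graph (insert v U) F'"
    unfolding graph_def F'_def using finU edges uv u by auto
  hence "connected_graph (insert v U) F'" using conn' by (simp add: connected_graph_def)
  moreover have "card F' + 1 = card (insert v U)"
    using cardF finF nF finU v by (simp add: F'_def)
  ultimately show ?thesis by (simp add: is_tree_def F'_def)
qed

lemma crossing:
  assumes "(x, y) \<in> R\<^sup>*" "x \<in> U" "y \<notin> U"
  shows "\<exists>a b. (a, b) \<in> R \<and> a \<in> U \<and> b \<notin> U"
  using assms
proof (induction rule: rtrancl_induct)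
  case base thus ?case by simp
next
  case (step y z)
  show ?case
  proof (cases "y \<in> U")
    case True thus ?thesis using step by blast
  next
    case False thus ?thesis using step by blast
  qed
qed

lemma take_append_le: "i \<le> length xs \<Longrightarrow> take i (xs @ ys) = take i xs"
  by simp

lemma exists_pattern:
  assumes G: "connected_graph V E" and r: "r \<in> V"
  shows "\<exists>\<sigma>. expanding_pattern E r \<sigma> \<and> insert r (\<Union> (set \<sigma>)) = V"
proof -
  have gr: "graph V E" and finV: "finite V" and conn: "\<forall>u\<in>V. \<forall>v\<in>V. (u, v) \<in> (adj E)\<^sup>*"
    and edges: "\<forall>e\<in>E. e \<subseteq> V \<and> card e = 2"
    using G by (auto simp: connected_graph_def graph_def)
  have main: "\<And>\<sigma>. expanding_pattern E r \<sigma> \<Longrightarrow> insert r (\<Union> (set \<sigma>)) \<subseteq> V \<Longrightarrow>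
      card (V - insert r (\<Union> (set \<sigma>))) = n \<Longrightarrow>
      \<exists>\<sigma>'. expanding_pattern E r \<sigma>' \<and> insert r (\<Union> (set \<sigma>')) = V" for n
  proof (induction n rule: less_induct)
    case (less n \<sigma>)
    define U where "U = insert r (\<Union> (set \<sigma>))"
    show ?case
    proof (cases "U = V")
      case True thus ?thesis using less.prems by (auto simp: U_def)
    next
      case False
      then obtain y where y: "y \<in> V" "y \<notin> U" using less.prems(2) unfolding U_def by blast
      have "(r, y) \<in> (adj E)\<^sup>*" using conn r y by blast
      then obtain u v where uv: "(u, v) \<in> adj E" "u \<in> U" "v \<notin> U"
        using crossing[of r y "adj E" U] y by (auto simp: U_def)
      have eE: "{u, v} \<in> E" using uv by (simp add: adj_def)
      hence vV: "v \<in> V" using edges by auto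
      have ep: "expanding_pattern E r \<sigma>" using less.prems by simp
      have tree0: "is_tree U (set \<sigma>)"
      proof (cases "\<sigma> = []")
        case True thus ?thesis by (simp add: U_def tree_single)
      next
        case False
        have "length \<sigma> \<in> {1..length \<sigma>}" using False by (simp add: Suc_le_eq)
        hence "is_tree (\<Union> (set (take (length \<sigma>) \<sigma>))) (set (take (length \<sigma>) \<sigma>))"
          using ep unfolding expanding_pattern_def by blast
        moreover have "r \<in> \<Union> (set \<sigma>)" using ep False unfolding expanding_pattern_def
          by (metis UnionI hd_in_set)
        ultimately show ?thesis by (simp add: U_def insert_absorb)
      qed
      define \<sigma>' where "\<sigma>' = \<sigma> @ [{u, v}]"
      have U': "insert r (\<Union> (set \<sigma>')) = insert v U" using uv by (auto simp: \<sigma>'_def U_def)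
      have tree1: "is_tree (\<Union> (set \<sigma>')) (set \<sigma>')"
      proof -
        have "\<Union> (set \<sigma>') = insert v U"
        proof (cases "\<sigma> = []")
          case True thus ?thesis using uv by (auto simp: \<sigma>'_def U_def)
        next
          case False
          have "r \<in> \<Union> (set \<sigma>)" using ep False unfolding expanding_pattern_def
            by (metis UnionI hd_in_set)
          thus ?thesis using uv by (auto simp: \<sigma>'_def U_def)
        qed
        moreover have "set \<sigma>' = insert {u, v} (set \<sigma>)" by (simp add: \<sigma>'_def)
        ultimately show ?thesis using tree_extend[OF tree0 uv(2,3)] by simp
      qed
      have ep': "expanding_pattern E r \<sigma>'"
        unfolding expanding_pattern_def
      proof (intro conjI impI ballI)
        show "set \<sigma>' \<subseteq> E" using ep eE by (auto simp: \<sigma>'_def expanding_pattern_def)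
        show "r \<in> hd \<sigma>'"
        proof (cases "\<sigma> = []")
          case True thus ?thesis using uv by (simp add: \<sigma>'_def U_def)
        next
          case False thus ?thesis using ep by (simp add: \<sigma>'_def expanding_pattern_def)
        qed
        fix i assume i: "i \<in> {1..length \<sigma>'}"
        show "is_tree (\<Union> (set (take i \<sigma>'))) (set (take i \<sigma>'))"
        proof (cases "i \<le> length \<sigma>")
          case True
          hence "take i \<sigma>' = take i \<sigma>" by (simp add: \<sigma>'_def)
          thus ?thesis using ep True i by (simp add: expanding_pattern_def)
        next
          case False
          hence "take i \<sigma>' = \<sigma>'" using i by (simp add: \<sigma>'_def)
          thus ?thesis using tree1 by simp
        qed
      qed
      have sub': "insert r (\<Union> (set \<sigma>')) \<subseteq> V" using U' vV less.prems(2) by (simp add: U_def)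
      have "card (V - insert r (\<Union> (set \<sigma>'))) < n"
      proof -
        have "V - insert v U \<subset> V - U" using vV uv by auto
        hence "card (V - insert v U) < card (V - U)" using finV by (intro psubset_card_mono) auto
        thus ?thesis using U' less.prems(3) by (simp add: U_def)
      qed
      thus ?thesis using less.IH ep' sub' by blast
    qed
  qed
  have "expanding_pattern E r []" by (simp add: expanding_pattern_def)
  thus ?thesis using main[of "[]"] r by simp
qed

lemma sum_set_le_list: "sum (f :: 'b \<Rightarrow> nat) (set xs) \<le> sum_list (map f xs)"
proof (induction xs)
  case (Cons x xs)
  have "sum f (set (x # xs)) \<le> f x + sum f (set xs)"
    by (simp add: sum.insert_if)
  thus ?case using Cons by simp
qed simp

lemma prefix_quota:
  assumes G: "connected_graph V E" and r: "r \<in> V" and fp: "feasible_pattern V E r w \<sigma>"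
    and q: "q \<le> real (\<Sum>v\<in>{v\<in>Vstar V w. latency len r \<sigma> v \<le> t}. w v)"
  shows "quota_opt V E r len w q \<le> t"
proof -
  have finV: "finite V" and edges: "\<forall>e\<in>E. e \<subseteq> V \<and> card e = 2"
    using G by (auto simp: connected_graph_def graph_def)
  have ep: "expanding_pattern E r \<sigma>" and cov: "Vstar V w \<subseteq> insert r (\<Union> (set \<sigma>))"
    using fp by (auto simp: feasible_pattern_def)
  define kv where "kv = (\<lambda>v. LEAST i. i < length \<sigma> \<and> v \<in> \<sigma> ! i)"
  define A where "A = {v\<in>Vstar V w. v \<noteq> r \<and> latency len r \<sigma> v \<le> t}"
  have kvA: "kv v < length \<sigma> \<and> v \<in> \<sigma> ! kv v" if "v \<in> A" for v
  proof -
    have "v \<in> \<Union> (set \<sigma>)" using that cov by (auto simp: A_def)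
    then obtain i where "i < length \<sigma>" "v \<in> \<sigma> ! i" by (auto simp: in_set_conv_nth)
    thus ?thesis unfolding kv_def by (rule LeastI[of "\<lambda>i. i < length \<sigma> \<and> v \<in> \<sigma> ! i", OF conjI])
  qed
  have latA: "latency len r \<sigma> v = sum_list (map len (take (Suc (kv v)) \<sigma>))" if "v \<in> A" for v
    using that by (simp add: latency_def A_def kv_def)
  have finA: "finite A" using finV by (rule finite_subset[rotated]) (auto simp: A_def Vstar_def)
  define i0 where "i0 = (if A = {} then 0 else Max ((\<lambda>v. Suc (kv v)) ` A))"
  have i0: "i0 \<le> length \<sigma> \<and> sum_list (map len (take i0 \<sigma>)) \<le> t \<and> (\<forall>v\<in>A. v \<in> \<Union> (set (take i0 \<sigma>)))"
  proof (cases "A = {}")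
    case True thus ?thesis by (simp add: i0_def)
  next
    case False
    have "i0 \<in> (\<lambda>v. Suc (kv v)) ` A" unfolding i0_def using False finA by (simp add: Max_in)
    then obtain v0 where v0: "v0 \<in> A" "i0 = Suc (kv v0)" by blast
    have ge: "Suc (kv v) \<le> i0" if "v \<in> A" for v
      unfolding i0_def using False finA that by (auto intro: Max_ge)
    have "sum_list (map len (take i0 \<sigma>)) \<le> t" using v0 latA[OF v0(1)] by (simp add: A_def)
    moreover have "i0 \<le> length \<sigma>" using kvA[OF v0(1)] v0 by simp
    moreover have "v \<in> \<Union> (set (take i0 \<sigma>))" if "v \<in> A" for v
    proof -
      have "kv v < length (take i0 \<sigma>)" using kvA[OF that] ge[OF that] by simp
      hence "take i0 \<sigma> ! kv v \<in> set (take i0 \<sigma>)" by (rule nth_mem)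
      moreover have "take i0 \<sigma> ! kv v = \<sigma> ! kv v" using ge[OF that] by simp
      ultimately show ?thesis using kvA[OF that] by blast
    qed
    ultimately show ?thesis by blast
  qed
  define T' where "T' = (insert r (\<Union> (set (take i0 \<sigma>))), set (take i0 \<sigma>))"
  have sE: "set (take i0 \<sigma>) \<subseteq> E" using ep by (auto simp: expanding_pattern_def dest: in_set_takeD)
  have rs: "rooted_subtree V E r T'"
    unfolding rooted_subtree_def T'_def fst_conv snd_conv
  proof (intro conjI)
    show "insert r (\<Union> (set (take i0 \<sigma>))) \<subseteq> V" using sE edges r by blast
    show "set (take i0 \<sigma>) \<subseteq> E" by (rule sE)
    show "r \<in> insert r (\<Union> (set (take i0 \<sigma>)))" by simp
    show "is_tree (insert r (\<Union> (set (take i0 \<sigma>)))) (set (take i0 \<sigma>))"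
    proof (cases "i0 = 0")
      case True thus ?thesis by (simp add: tree_single)
    next
      case False
      hence ne: "\<sigma> \<noteq> []" and i1: "i0 \<in> {1..length \<sigma>}" using i0 by auto
      have tr: "is_tree (\<Union> (set (take i0 \<sigma>))) (set (take i0 \<sigma>))"
        using ep i1 by (simp add: expanding_pattern_def)
      have "hd \<sigma> \<in> set (take i0 \<sigma>)"
      proof -
        have l: "0 < length (take i0 \<sigma>)" using ne False by simp
        have "take i0 \<sigma> ! 0 \<in> set (take i0 \<sigma>)" using l by (rule nth_mem)
        moreover have "take i0 \<sigma> ! 0 = hd \<sigma>" using False ne by (simp add: hd_conv_nth)
        ultimately show ?thesis by simp
      qed
      moreover have "r \<in> hd \<sigma>" using ep ne by (simp add: expanding_pattern_def)
      ultimately have "r \<in> \<Union> (set (take i0 \<sigma>))" by blast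
      thus ?thesis using tr by (simp add: insert_absorb)
    qed
  qed
  have len: "tree_length len T' \<le> t"
    using sum_set_le_list[of len "take i0 \<sigma>"] i0 by (simp add: tree_length_def T'_def)
  have subT: "{v\<in>Vstar V w. latency len r \<sigma> v \<le> t} \<subseteq> fst T'"
    using i0 by (auto simp: T'_def A_def)
  have finT: "finite (fst T')" using rs finV by (auto simp: rooted_subtree_def intro: finite_subset)
  have "(\<Sum>v\<in>{v\<in>Vstar V w. latency len r \<sigma> v \<le> t}. w v) \<le> tree_weight w T'"
    unfolding tree_weight_def by (rule sum_mono2[OF finT subT]) simp
  hence "q \<le> real (tree_weight w T')" using q by linarith
  hence "tree_length len T' \<in> {tree_length len T | T. rooted_subtree V E r T \<and> real (tree_weight w T) \<ge> q}"
    using rs by blast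
  hence "quota_opt V E r len w q \<le> tree_length len T'"
    unfolding quota_opt_def by (rule cInf_lower) simp
  thus ?thesis using len by simp
qed

theorem lemma7:
  fixes V :: "'a set" and E :: "'a set set" and r :: 'a
    and len :: "'a set \<Rightarrow> nat" and w :: "'a \<Rightarrow> nat"
    and \<epsilon> :: real and W :: nat and \<omega> :: nat
    and T :: "nat \<Rightarrow> 'a set \<times> 'a set set"
  assumes G: "connected_graph V E" and r: "r \<in> V"
    and W_def: "W = (\<Sum>v\<in>V. w v)" and W_pos: "W > 0"
    and eps: "\<epsilon> > 0"
    and omega_def: "\<omega> = nat \<lceil>ln (real W) / ln (1 + \<epsilon>)\<rceil>"
    and T0: "T 0 = ({r}, {})"
    and T_tree: "\<And>i. i \<le> \<omega> \<Longrightarrow> rooted_subtree V E r (T i)"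
    and T_quota: "\<And>i. i \<le> \<omega> \<Longrightarrow>
        real (tree_weight w (T i)) \<ge> real W - real W / (1 + \<epsilon>) ^ i"
    and T_approx: "\<And>i. i \<le> \<omega> \<Longrightarrow>
        real (tree_length len (T i)) \<le> 5 / 2 * real (quota_opt V E r len w (real W - real W / (1 + \<epsilon>) ^ i))"
  shows "shortest_path_cost \<omega> (\<lambda>i j. real W / (1 + \<epsilon>) ^ i * real (tree_length len (T j)))
         \<le> 5 / 2 * (1 + \<epsilon>) * exp 1 * real (ESP_opt V E r len w)"
proof -
  define a where "a = 1 + \<epsilon>"
  have a1: "a > 1" using eps by (simp add: a_def)
  obtain k where k: "k \<ge> 1" "(1+\<epsilon>)^k \<le> exp 1 * \<epsilon> * k" using choose_k[OF eps] by blast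
  have kc: "a^k \<le> exp 1 * (a-1) * k" using k by (simp add: a_def)
  have finV: "finite V" and edges: "\<forall>e\<in>E. e \<subseteq> V \<and> card e = 2"
    using G by (auto simp: connected_graph_def graph_def)
  define Sset where "Sset = {total_latency V len w r \<sigma> | \<sigma>. feasible_pattern V E r w \<sigma>}"
  obtain \<sigma>0 where s0: "expanding_pattern E r \<sigma>0" "insert r (\<Union> (set \<sigma>0)) = V"
    using exists_pattern[OF G r] by blast
  have "feasible_pattern V E r w \<sigma>0" using s0 by (auto simp: feasible_pattern_def Vstar_def)
  hence "Sset \<noteq> {}" by (auto simp: Sset_def)
  hence "Inf Sset \<in> Sset" by (rule Inf_nat_def1)
  then obtain \<sigma> where fp: "feasible_pattern V E r w \<sigma>"
      and opt: "total_latency V len w r \<sigma> = ESP_opt V E r len w"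
    by (auto simp: Sset_def ESP_opt_def)
  define Lv where "Lv = latency len r \<sigma>"
  define Vs where "Vs = Vstar V w"
  have finVs: "finite Vs" using finV by (simp add: Vs_def Vstar_def)
  have WVs: "W = (\<Sum>v\<in>Vs. w v)"
  proof -
    have "(\<Sum>v\<in>Vs. w v) = (\<Sum>v\<in>V. if 0 < w v then w v else 0)"
      unfolding Vs_def Vstar_def using finV by (rule sum.inter_filter)
    also have "\<dots> = (\<Sum>v\<in>V. w v)" by (rule sum.cong) auto
    finally show ?thesis using W_def by simp
  qed
  define N where "N = (\<Sum>v\<in>Vs. Lv v)"
  have LvN: "Lv v \<le> N" if "v \<in> Vs" for v
    unfolding N_def using that finVs by (intro member_le_sum) auto
  define Fn where "Fn = (\<lambda>t. \<Sum>v\<in>{v\<in>Vs. Lv v \<le> t}. w v)"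
  define Rn where "Rn = (\<lambda>t. \<Sum>v\<in>Vs. if t < Lv v then w v else 0)"
  have FR: "Fn t + Rn t = W" for t
  proof -
    have "Fn t = (\<Sum>v\<in>Vs. if Lv v \<le> t then w v else 0)"
      unfolding Fn_def using finVs by (rule sum.inter_filter)
    hence "Fn t + Rn t = (\<Sum>v\<in>Vs. (if Lv v \<le> t then w v else 0) + (if t < Lv v then w v else 0))"
      by (simp add: Rn_def sum.distrib)
    also have "\<dots> = (\<Sum>v\<in>Vs. w v)" by (rule sum.cong) auto
    finally show ?thesis using WVs by simp
  qed
  define q where "q = (\<lambda>j::nat. real W - real W / a^j)"
  define \<tau> where "\<tau> = (\<lambda>j. LEAST t. q j \<le> real (Fn t))"
  have FN: "Fn N = W"
  proof -
    have "{v\<in>Vs. Lv v \<le> N} = Vs" using LvN by auto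
    thus ?thesis using WVs by (simp add: Fn_def)
  qed
  have qW: "q j \<le> real W" for j using a1 by (simp add: q_def)
  have Fmono: "Fn t \<le> Fn t'" if "t \<le> t'" for t t'
    unfolding Fn_def using that finVs by (intro sum_mono2) auto
  have tauq: "q j \<le> real (Fn (\<tau> j))" for j
    unfolding \<tau>_def by (rule LeastI[of _ N]) (use FN qW in simp)
  have tauN: "\<tau> j \<le> N" for j
    unfolding \<tau>_def by (rule Least_le) (use FN qW in simp)
  have iff: "(real W / a^j < real (Rn t)) \<longleftrightarrow> \<not> (q j \<le> real (Fn t))" for j t
  proof -
    have "real (Fn t) = real W - real (Rn t)" using FR[of t] by (simp add: of_nat_add[symmetric] del: of_nat_add)
    thus ?thesis by (simp add: q_def not_le)
  qed
  have tau_sum: "real (\<tau> j) = (\<Sum>t<N. if real W / a^j < real (Rn t) then 1 else 0)" for j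
  proof -
    have set_eq: "{t\<in>{..<N}. \<not> (q j \<le> real (Fn t))} = {..<\<tau> j}"
    proof (intro set_eqI iffI)
      fix t assume "t \<in> {t\<in>{..<N}. \<not> (q j \<le> real (Fn t))}"
      hence h: "\<not> (q j \<le> real (Fn t))" by simp
      show "t \<in> {..<\<tau> j}"
      proof (rule ccontr)
        assume "t \<notin> {..<\<tau> j}"
        hence "\<tau> j \<le> t" by simp
        hence "Fn (\<tau> j) \<le> Fn t" by (rule Fmono)
        thus False using h tauq[of j] by linarith
      qed
    next
      fix t assume "t \<in> {..<\<tau> j}"
      hence "t < \<tau> j" by simp
      hence "\<not> (q j \<le> real (Fn t))" unfolding \<tau>_def by (rule not_less_Least)
      thus "t \<in> {t\<in>{..<N}. \<not> (q j \<le> real (Fn t))}" using \<open>t < \<tau> j\<close> tauN[of j] by simp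
    qed
    have "(\<Sum>t<N. if real W / a^j < real (Rn t) then 1 else (0::real))
        = (\<Sum>t<N. if \<not> (q j \<le> real (Fn t)) then 1 else 0)" by (simp add: iff)
    also have "\<dots> = (\<Sum>t\<in>{t\<in>{..<N}. \<not> (q j \<le> real (Fn t))}. 1)"
      by (rule sum.inter_filter[symmetric]) simp
    also have "\<dots> = real (\<tau> j)" unfolding set_eq by simp
    finally show ?thesis by simp
  qed
  have hell: "real (tree_length len (T j)) \<le> 5/2 * real (\<tau> j)" if "1 \<le> j" "j \<le> \<omega>" for j
  proof -
    have "quota_opt V E r len w (q j) \<le> \<tau> j"
    proof (rule prefix_quota[OF G r fp])
      show "q j \<le> real (\<Sum>v\<in>{v\<in>Vstar V w. latency len r \<sigma> v \<le> \<tau> j}. w v)"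
        using tauq[of j] by (simp add: Fn_def Vs_def Lv_def)
    qed
    hence "real (quota_opt V E r len w (q j)) \<le> real (\<tau> j)" by simp
    moreover have "real (tree_length len (T j)) \<le> 5/2 * real (quota_opt V E r len w (q j))"
      using T_approx[OF that(2)] by (simp add: q_def a_def)
    ultimately show ?thesis by linarith
  qed
  have Rb: "0 \<le> real (Rn t) \<and> real (Rn t) \<le> real W" for t
    using FR[of t] by simp
  have sumR: "(\<Sum>t<N. real (Rn t)) = real (ESP_opt V E r len w)"
  proof -
    have inner: "(\<Sum>t<N. if t < Lv v then w v else 0) = w v * Lv v" if "v \<in> Vs" for v
    proof -
      have "(\<Sum>t<N. if t < Lv v then w v else 0) = (\<Sum>t\<in>{t\<in>{..<N}. t < Lv v}. w v)"
        by (rule sum.inter_filter[symmetric]) simp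
      also have "{t\<in>{..<N}. t < Lv v} = {..<Lv v}" using LvN[OF that] by auto
      finally show ?thesis by simp
    qed
    have "(\<Sum>t<N. Rn t) = (\<Sum>v\<in>Vs. \<Sum>t<N. if t < Lv v then w v else 0)"
      unfolding Rn_def by (rule sum.swap)
    also have "\<dots> = (\<Sum>v\<in>Vs. w v * Lv v)" by (rule sum.cong) (simp_all add: inner)
    also have "\<dots> = total_latency V len w r \<sigma>" by (simp add: total_latency_def Vs_def Lv_def)
    finally show ?thesis using opt by (simp add: of_nat_sum[symmetric] del: of_nat_sum)
  qed
  define c where "c = (\<lambda>i j. real W / (1 + \<epsilon>) ^ i * real (tree_length len (T j)))"
  have finP: "finite {path_cost c p | p. H_path \<omega> p}"
  proof -
    have "{path_cost c p | p. H_path \<omega> p} = path_cost c ` {p. H_path \<omega> p}" by auto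
    thus ?thesis using finite_H_paths by simp
  qed
  have RHS0: "0 \<le> 5 / 2 * (1 + \<epsilon>) * exp 1 * real (ESP_opt V E r len w)" using eps by simp
  show ?thesis
  proof (cases "\<omega> = 0")
    case True
    have "H_path \<omega> [0]" using True by (simp add: H_path_def)
    hence "shortest_path_cost \<omega> c \<le> path_cost c [0]"
      unfolding shortest_path_cost_def by (intro Min_le[OF finP]) blast
    also have "\<dots> = 0" by (simp add: pc_single)
    finally show ?thesis using RHS0 by (simp add: c_def)
  next
    case False
    hence om: "\<omega> \<ge> 1" by simp
    obtain p where p: "H_path \<omega> p"
      "path_cost (\<lambda>i j. real W / a^i * real (tree_length len (T j))) p \<le> 5/2 * a * exp 1 * (\<Sum>t<N. real (Rn t))"
      using comb[where W="real W" and a=a and C="5/2" and \<omega>=\<omega> and N=N and k=k and ell="\<lambda>j. real (tree_length len (T j))" and R="\<lambda>t. real (Rn t)" and \<tau>=\<tau>]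
        W_pos a1 k(1) om Rb tau_sum hell kc by auto
    have "shortest_path_cost \<omega> c \<le> path_cost c p"
      unfolding shortest_path_cost_def using p(1) by (intro Min_le[OF finP]) blast
    also have "\<dots> \<le> 5/2 * a * exp 1 * (\<Sum>t<N. real (Rn t))" using p(2) by (simp add: c_def a_def)
    finally show ?thesis using sumR by (simp add: c_def a_def)
  qed
qed

end
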